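(* Let $n\ge m$, $\mu>0$ and let $\varphi:\Delta^m\to\Omega_1[m,n]$, $\varphi(z_1,\dots,z_m)=\operatorname{diag}(z_1,\dots,z_m)$ (the $m\times n$ matrix whose $(j,j)$ entry is $z_j$ for $j\le m$ and all other entries are $0$). Then $f:M_{\Delta^m}(\mu)\to M_{\Omega_1[m,n]}(\mu)$, $f(z,w)=(\varphi(z),w)$, is a totally geodesic Kähler immersion.
   Context: $\Omega_1[m,n]=\{Z\in M_{m,n}(\mathbb C): I_m-ZZ^*>0\}$ with generic norm $N(Z,Z)=\det(I_m-ZZ^* )$; $\Delta^m$ is the unit polydisk with $N_{\Delta^m}(z,z)=\prod_j(1-|z_j|^2)$. For a domain $\Omega$ with generic norm $N_\Omega$ and $\mu>0$: $M_\Omega(\mu)=\{(z,w)\in\Omega\times\mathbb C:|w|^2<N_\Omega^\mu(z,z)\}$ with Kähler metric $\omega(\mu)=\frac i2\partial\bar\partial(-\log(N_\Omega^\mu(z,z)-|w|^2))$. A Kähler immersion is a holomorphic map pulling back the target metric to the source metric; totally geodesic means geodesics of the image submanifold are geodesics of the ambient space. *)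

theory Defs
  imports "HOL-Analysis.Analysis"
begin

definition dd :: "('a::real_normed_vector \<Rightarrow> real) \<Rightarrow> 'a \<Rightarrow> 'a \<Rightarrow> real" where
  "dd \<Phi> p u = deriv (\<lambda>t. \<Phi> (p + t *\<^sub>R u)) 0"

definition dd2 :: "('a::real_normed_vector \<Rightarrow> real) \<Rightarrow> 'a \<Rightarrow> 'a \<Rightarrow> 'a \<Rightarrow> real" where
  "dd2 \<Phi> p u v = deriv (\<lambda>s. dd \<Phi> (p + s *\<^sub>R v) u) 0"

text \<open>Riemannian metric (real part of the Hermitian metric sum g_{j kbar} u_j conj v_k,
  g_{j kbar} = d^2 Phi / dz_j d zbar_k) of the Kaehler form (i/2) ddbar Phi;
  J is multiplication by i on the coordinate space.\<close>
definition kmetric :: "('a::real_normed_vector \<Rightarrow> 'a) \<Rightarrow> ('a \<Rightarrow> real) \<Rightarrow> 'a \<Rightarrow> 'a \<Rightarrow> 'a \<Rightarrow> real" where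
  "kmetric J \<Phi> p u v = (dd2 \<Phi> p u v + dd2 \<Phi> p (J u) (J v)) / 4"

definition pullback_metric ::
  "('b::real_normed_vector \<Rightarrow> 'b \<Rightarrow> 'b \<Rightarrow> real) \<Rightarrow> ('a::real_normed_vector \<Rightarrow> 'b) \<Rightarrow> 'a \<Rightarrow> 'a \<Rightarrow> 'a \<Rightarrow> real" where
  "pullback_metric G f p u v =
     G (f p) (frechet_derivative f (at p) u) (frechet_derivative f (at p) v)"

text \<open>Geodesic equation (with lowered index):
  g(gamma'', w) + (d/ds g_{gamma(s)})(gamma', w) - 1/2 (D_w g)(gamma', gamma') = 0 for all w.\<close>
definition geodesic ::
  "'a::real_normed_vector set \<Rightarrow> ('a \<Rightarrow> 'a \<Rightarrow> 'a \<Rightarrow> real) \<Rightarrow> real \<Rightarrow> real \<Rightarrow> (real \<Rightarrow> 'a) \<Rightarrow> bool" where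
  "geodesic S G a b \<gamma> \<longleftrightarrow>
     (\<forall>t\<in>{a<..<b}.
        \<gamma> t \<in> S \<and> \<gamma> differentiable (at t) \<and>
        (\<lambda>s. vector_derivative \<gamma> (at s)) differentiable (at t) \<and>
        (\<forall>w. G (\<gamma> t) (vector_derivative (\<lambda>s. vector_derivative \<gamma> (at s)) (at t)) w
              + deriv (\<lambda>s. G (\<gamma> s) (vector_derivative \<gamma> (at t)) w) t
              - dd (\<lambda>p. G p (vector_derivative \<gamma> (at t)) (vector_derivative \<gamma> (at t))) (\<gamma> t) w / 2
              = 0))"

definition holomorphic_map ::
  "('a::real_normed_vector \<Rightarrow> 'a) \<Rightarrow> ('b::real_normed_vector \<Rightarrow> 'b) \<Rightarrow> 'a set \<Rightarrow> ('a \<Rightarrow> 'b) \<Rightarrow> bool" where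
  "holomorphic_map J J' S f \<longleftrightarrow>
     (\<forall>p\<in>S. \<exists>f'. (f has_derivative f') (at p) \<and> (\<forall>u. f' (J u) = J' (f' u)))"

definition kahler_immersion ::
  "('a::real_normed_vector \<Rightarrow> 'a) \<Rightarrow> 'a set \<Rightarrow> ('a \<Rightarrow> real) \<Rightarrow>
   ('b::real_normed_vector \<Rightarrow> 'b) \<Rightarrow> 'b set \<Rightarrow> ('b \<Rightarrow> real) \<Rightarrow> ('a \<Rightarrow> 'b) \<Rightarrow> bool" where
  "kahler_immersion J S \<Phi> J' S' \<Phi>' f \<longleftrightarrow>
     f ` S \<subseteq> S' \<and> holomorphic_map J J' S f \<and>
     (\<forall>p\<in>S. \<forall>u v. pullback_metric (kmetric J' \<Phi>') f p u v = kmetric J \<Phi> p u v)"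

text \<open>Totally geodesic: geodesics of the image submanifold f(S) (with induced metric,
  i.e. geodesics of the pulled back metric transported by f) are geodesics of the ambient space.\<close>
definition totally_geodesic ::
  "'a::real_normed_vector set \<Rightarrow> ('b::real_normed_vector \<Rightarrow> 'b) \<Rightarrow> 'b set \<Rightarrow> ('b \<Rightarrow> real) \<Rightarrow> ('a \<Rightarrow> 'b) \<Rightarrow> bool" where
  "totally_geodesic S J' S' \<Phi>' f \<longleftrightarrow>
     (\<forall>a b \<gamma>. geodesic S (pullback_metric (kmetric J' \<Phi>') f) a b \<gamma> \<longrightarrow>
              geodesic S' (kmetric J' \<Phi>') a b (f \<circ> \<gamma>))"

definition J_poly :: "(complex^'m) \<times> complex \<Rightarrow> (complex^'m) \<times> complex" where
  "J_poly x = ((\<chi> j. \<i> * fst x $ j), \<i> * snd x)"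

definition J_mat :: "(complex^'n^'m) \<times> complex \<Rightarrow> (complex^'n^'m) \<times> complex" where
  "J_mat x = ((\<chi> i j. \<i> * fst x $ i $ j), \<i> * snd x)"

definition polydisk :: "(complex^'m) set" where
  "polydisk = {z. \<forall>j. cmod (z $ j) < 1}"

definition N_poly :: "complex^'m \<Rightarrow> real" where
  "N_poly z = (\<Prod>j\<in>UNIV. 1 - (cmod (z $ j))\<^sup>2)"

definition conj_transpose :: "complex^'n^'m \<Rightarrow> complex^'m^'n" where
  "conj_transpose Z = (\<chi> i j. cnj (Z $ j $ i))"

definition pos_def_herm :: "complex^'m^'m \<Rightarrow> bool" where
  "pos_def_herm A \<longleftrightarrow> (\<forall>i j. A $ i $ j = cnj (A $ j $ i)) \<and>
     (\<forall>v. v \<noteq> 0 \<longrightarrow> 0 < Re (\<Sum>i\<in>UNIV. \<Sum>j\<in>UNIV. cnj (v $ i) * A $ i $ j * v $ j))"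

definition Omega1 :: "(complex^'n^'m) set" where
  "Omega1 = {Z. pos_def_herm (mat 1 - Z ** conj_transpose Z)}"

definition N_Omega1 :: "complex^'n^'m \<Rightarrow> real" where
  "N_Omega1 Z = Re (det (mat 1 - Z ** conj_transpose Z))"

definition hartogs :: "'a set \<Rightarrow> ('a \<Rightarrow> real) \<Rightarrow> real \<Rightarrow> ('a \<times> complex) set" where
  "hartogs \<Omega> N \<mu> = {(z, w). z \<in> \<Omega> \<and> (cmod w)\<^sup>2 < N z powr \<mu>}"

definition hartogs_pot :: "('a \<Rightarrow> real) \<Rightarrow> real \<Rightarrow> 'a \<times> complex \<Rightarrow> real" where
  "hartogs_pot N \<mu> x = - ln (N (fst x) powr \<mu> - (cmod (snd x))\<^sup>2)"

text \<open>diag(z_1,...,z_m) as an m x n matrix; the injection iota : rows -> columns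
  fixes which column plays the role of the j-th column (entry (j, iota j) is z_j).\<close>
definition diag_emb :: "('m \<Rightarrow> 'n) \<Rightarrow> complex^'m \<Rightarrow> complex^'n^'m" where
  "diag_emb \<iota> z = (\<chi> i k. if k = \<iota> i then z $ i else 0)"

definition f_map :: "('m \<Rightarrow> 'n) \<Rightarrow> (complex^'m) \<times> complex \<Rightarrow> (complex^'n^'m) \<times> complex" where
  "f_map \<iota> x = (diag_emb \<iota> (fst x), snd x)"

end

theory Submission
  imports Defs
begin


definition Df :: "('a::real_normed_vector \<Rightarrow> real) \<Rightarrow> 'a \<Rightarrow> 'a \<Rightarrow> real" where
  "Df f x = frechet_derivative f (at x)"

lemma Df_has: "f differentiable (at x) \<Longrightarrow> (f has_derivative Df f x) (at x)"
  by (simp add: Df_def frechet_derivative_works)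

lemma Df_eq: "(f has_derivative f') (at x) \<Longrightarrow> Df f x = f'"
  unfolding Df_def by (rule frechet_derivative_at[symmetric])

lemma Df_linear: "f differentiable (at x) \<Longrightarrow> linear (Df f x)"
  using Df_has has_derivative_linear by blast

lemma Df_cong:
  assumes "open U" "x \<in> U" "\<And>y. y \<in> U \<Longrightarrow> f y = g y" "f differentiable (at x)"
  shows "g differentiable (at x) \<and> Df g x = Df f x"
proof -
  have "(g has_derivative Df f x) (at x)"
    using has_derivative_transform_within_open[OF Df_has[OF assms(4)] assms(1,2)] assms(3) by blast
  thus ?thesis using Df_eq differentiable_def by metis
qed

fun Ck :: "nat \<Rightarrow> 'a::real_normed_vector set \<Rightarrow> ('a \<Rightarrow> real) \<Rightarrow> bool" where
  "Ck 0 U f = True"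
| "Ck (Suc k) U f = ((\<forall>x\<in>U. f differentiable (at x)) \<and> (\<forall>w. Ck k U (\<lambda>x. Df f x w)))"

lemma Ck_mono: "Ck (Suc k) U f \<Longrightarrow> Ck k U f"
proof (induction k arbitrary: f)
  case 0 then show ?case by simp
next
  case (Suc k) then show ?case by auto
qed

lemma Ck_cong: "open U \<Longrightarrow> (\<And>x. x \<in> U \<Longrightarrow> f x = g x) \<Longrightarrow> Ck k U f \<Longrightarrow> Ck k U g"
proof (induction k arbitrary: f g)
  case 0 then show ?case by simp
next
  case (Suc k)
  have d: "\<And>x. x \<in> U \<Longrightarrow> g differentiable (at x) \<and> Df g x = Df f x"
    using Df_cong[OF Suc.prems(1) _ Suc.prems(2)] Suc.prems(3) by auto
  show ?case
  proof (simp, intro conjI allI ballI)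
    fix x assume "x \<in> U" then show "g differentiable (at x)" using d by blast
  next
    fix w show "Ck k U (\<lambda>x. Df g x w)"
      using Suc.IH[OF Suc.prems(1), of "\<lambda>x. Df f x w" "\<lambda>x. Df g x w"] Suc.prems(3) d by auto
  qed
qed

lemma Ck_subset: "Ck k U f \<Longrightarrow> V \<subseteq> U \<Longrightarrow> Ck k V f"
  by (induction k arbitrary: f) auto

lemma Ck_const: "open U \<Longrightarrow> Ck k U (\<lambda>x. c)"
proof (induction k arbitrary: c)
  case 0 then show ?case by simp
next
  case (Suc k)
  have "\<And>x. Df (\<lambda>x. c) x = (\<lambda>w. 0)" by (rule Df_eq) simp
  then have e: "\<And>w. (\<lambda>x. Df (\<lambda>x. c) x w) = (\<lambda>x. 0)" by metis
  show ?case
  proof (simp only: Ck.simps, intro conjI ballI allI)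
    fix w show "Ck k U (\<lambda>x. Df (\<lambda>x. c) x w)" unfolding e using Suc by blast
  qed simp
qed

lemma Ck_bl: "open U \<Longrightarrow> bounded_linear l \<Longrightarrow> Ck k U l"
proof (cases k)
  case 0 then show ?thesis by simp
next
  case (Suc j)
  assume "open U" "bounded_linear l"
  have "\<And>x. Df l x = l" by (rule Df_eq) (simp add: \<open>bounded_linear l\<close> bounded_linear_imp_has_derivative)
  moreover have "\<And>x. l differentiable (at x)"
    using \<open>bounded_linear l\<close> bounded_linear_imp_differentiable by blast
  ultimately show ?thesis using Suc Ck_const[OF \<open>open U\<close>] by simp
qed

lemma Ck_add: "open U \<Longrightarrow> Ck k U f \<Longrightarrow> Ck k U g \<Longrightarrow> Ck k U (\<lambda>x. f x + g x)"
proof (induction k arbitrary: f g)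
  case 0 then show ?case by simp
next
  case (Suc k)
  have d: "\<And>x. x \<in> U \<Longrightarrow> (\<lambda>x. f x + g x) differentiable (at x) \<and>
      Df (\<lambda>x. f x + g x) x = (\<lambda>w. Df f x w + Df g x w)"
  proof -
    fix x assume "x \<in> U"
    then have h: "((\<lambda>x. f x + g x) has_derivative (\<lambda>w. Df f x w + Df g x w)) (at x)"
      using Suc.prems by (auto intro!: has_derivative_add Df_has)
    then show "(\<lambda>x. f x + g x) differentiable (at x) \<and> Df (\<lambda>x. f x + g x) x = (\<lambda>w. Df f x w + Df g x w)"
      using Df_eq differentiable_def by metis
  qed
  show ?case
  proof (simp only: Ck.simps, intro conjI allI ballI)
    fix x assume "x \<in> U" then show "(\<lambda>x. f x + g x) differentiable (at x)" using d by blast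
  next
    fix w
    have "Ck k U (\<lambda>x. Df f x w + Df g x w)" using Suc by auto
    then show "Ck k U (\<lambda>x. Df (\<lambda>x. f x + g x) x w)"
      by (rule Ck_cong[OF Suc.prems(1), rotated]) (simp add: d)
  qed
qed

lemma Ck_mult: "open U \<Longrightarrow> Ck k U f \<Longrightarrow> Ck k U g \<Longrightarrow> Ck k U (\<lambda>x. f x * g x)"
proof (induction k arbitrary: f g)
  case 0 then show ?case by simp
next
  case (Suc k)
  have d: "\<And>x. x \<in> U \<Longrightarrow> (\<lambda>x. f x * g x) differentiable (at x) \<and>
      Df (\<lambda>x. f x * g x) x = (\<lambda>w. f x * Df g x w + Df f x w * g x)"
  proof -
    fix x assume "x \<in> U"
    then have h: "((\<lambda>x. f x * g x) has_derivative (\<lambda>w. f x * Df g x w + Df f x w * g x)) (at x)"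
      using Suc.prems by (auto intro!: has_derivative_mult Df_has)
    then show "(\<lambda>x. f x * g x) differentiable (at x) \<and> Df (\<lambda>x. f x * g x) x = (\<lambda>w. f x * Df g x w + Df f x w * g x)"
      using Df_eq differentiable_def by metis
  qed
  show ?case
  proof (simp only: Ck.simps, intro conjI allI ballI)
    fix x assume "x \<in> U" then show "(\<lambda>x. f x * g x) differentiable (at x)" using d by blast
  next
    fix w
    have fk: "Ck k U f" "Ck k U g" using Suc.prems(2,3) Ck_mono by blast+
    have "Ck k U (\<lambda>x. f x * Df g x w + Df f x w * g x)"
      using Suc fk by (intro Ck_add) auto
    then show "Ck k U (\<lambda>x. Df (\<lambda>x. f x * g x) x w)"
      by (rule Ck_cong[OF Suc.prems(1), rotated]) (simp add: d)
  qed
qed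

lemma Ck_comp:
  assumes "open U" "\<And>j y. y \<in> I \<Longrightarrow> (hs j has_real_derivative hs (Suc j) y) (at y)"
    "\<And>x. x \<in> U \<Longrightarrow> g x \<in> I"
  shows "Ck k U g \<Longrightarrow> Ck k U (\<lambda>x. hs j (g x))"
proof (induction k arbitrary: j)
  case 0 then show ?case by simp
next
  case (Suc k)
  have d: "\<And>x. x \<in> U \<Longrightarrow> (\<lambda>x. hs j (g x)) differentiable (at x) \<and>
      Df (\<lambda>x. hs j (g x)) x = (\<lambda>w. hs (Suc j) (g x) * Df g x w)"
  proof -
    fix x assume "x \<in> U"
    have gI: "g x \<in> I" using assms(3) \<open>x \<in> U\<close> by blast
    have h: "((\<lambda>x. hs j (g x)) has_derivative (\<lambda>w. hs (Suc j) (g x) * Df g x w)) (at x)"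
      using gI has_derivative_compose[OF Df_has[of g x] has_field_derivative_imp_has_derivative[OF assms(2)[of "g x" j]]]
        Suc.prems \<open>x \<in> U\<close> assms(3) by (auto simp: mult.commute)
    then show "(\<lambda>x. hs j (g x)) differentiable (at x) \<and> Df (\<lambda>x. hs j (g x)) x = (\<lambda>w. hs (Suc j) (g x) * Df g x w)"
      using Df_eq differentiable_def by metis
  qed
  show ?case
  proof (simp only: Ck.simps, intro conjI allI ballI)
    fix x assume "x \<in> U" then show "(\<lambda>x. hs j (g x)) differentiable (at x)" using d by blast
  next
    fix w
    have gk: "Ck k U g" using Suc.prems Ck_mono by blast
    have "Ck k U (\<lambda>x. hs (Suc j) (g x) * Df g x w)"
      using Suc gk by (intro Ck_mult assms(1)) auto
    then show "Ck k U (\<lambda>x. Df (\<lambda>x. hs j (g x)) x w)"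
      by (rule Ck_cong[OF assms(1), rotated]) (simp add: d)
  qed
qed

lemma Ck_scale: "open U \<Longrightarrow> Ck k U f \<Longrightarrow> Ck k U (\<lambda>x. c * f x)"
  using Ck_mult[OF _ Ck_const] by blast

lemma Ck_diff: "open U \<Longrightarrow> Ck k U f \<Longrightarrow> Ck k U g \<Longrightarrow> Ck k U (\<lambda>x. f x - g x)"
proof -
  assume a: "open U" "Ck k U f" "Ck k U g"
  have "Ck k U (\<lambda>x. f x + (-1) * g x)" using a Ck_add Ck_scale by blast
  then show ?thesis by simp
qed

definition CCk :: "nat \<Rightarrow> 'a::real_normed_vector set \<Rightarrow> ('a \<Rightarrow> complex) \<Rightarrow> bool" where
  "CCk k U F \<longleftrightarrow> Ck k U (\<lambda>x. Re (F x)) \<and> Ck k U (\<lambda>x. Im (F x))"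

lemma CCk_add: "open U \<Longrightarrow> CCk k U F \<Longrightarrow> CCk k U G \<Longrightarrow> CCk k U (\<lambda>x. F x + G x)"
  unfolding CCk_def by (simp add: Ck_add)

lemma CCk_diff: "open U \<Longrightarrow> CCk k U F \<Longrightarrow> CCk k U G \<Longrightarrow> CCk k U (\<lambda>x. F x - G x)"
  unfolding CCk_def by (simp add: Ck_diff)

lemma CCk_mult: "open U \<Longrightarrow> CCk k U F \<Longrightarrow> CCk k U G \<Longrightarrow> CCk k U (\<lambda>x. F x * G x)"
  unfolding CCk_def by (simp add: Ck_diff Ck_add Ck_mult)

lemma CCk_const: "open U \<Longrightarrow> CCk k U (\<lambda>x. c)"
  unfolding CCk_def by (simp add: Ck_const)

lemma CCk_neg: "open U \<Longrightarrow> CCk k U F \<Longrightarrow> CCk k U (\<lambda>x. - F x)"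
  using CCk_diff[of U k "\<lambda>x. 0" F] CCk_const[of U k 0] by simp

lemma CCk_cnj: "open U \<Longrightarrow> CCk k U F \<Longrightarrow> CCk k U (\<lambda>x. cnj (F x))"
  unfolding CCk_def using Ck_scale[of U k "\<lambda>x. Im (F x)" "-1"] by simp

lemma CCk_sum: "finite A \<Longrightarrow> open U \<Longrightarrow> (\<And>a. a \<in> A \<Longrightarrow> CCk k U (F a)) \<Longrightarrow> CCk k U (\<lambda>x. \<Sum>a\<in>A. F a x)"
proof (induction A rule: finite_induct)
  case empty then show ?case by (simp add: CCk_const)
next
  case (insert a A) then show ?case by (simp add: CCk_add)
qed

lemma CCk_prod: "finite A \<Longrightarrow> open U \<Longrightarrow> (\<And>a. a \<in> A \<Longrightarrow> CCk k U (F a)) \<Longrightarrow> CCk k U (\<lambda>x. \<Prod>a\<in>A. F a x)"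
proof (induction A rule: finite_induct)
  case empty then show ?case by (simp add: CCk_const)
next
  case (insert a A) then show ?case by (simp add: CCk_mult)
qed

lemma CCk_coord:
  fixes U :: "((complex^'n^'m) \<times> complex) set"
  shows "open U \<Longrightarrow> CCk k U (\<lambda>x. fst x $ i $ j)"
  unfolding CCk_def
  by (intro conjI Ck_bl bounded_linear_compose[OF bounded_linear_Re]
      bounded_linear_compose[OF bounded_linear_Im]
      bounded_linear_compose[OF bounded_linear_vec_nth] bounded_linear_fst) auto

lemma CCk_det:
  fixes U :: "((complex^'n^'m) \<times> complex) set"
  shows "open U \<Longrightarrow> CCk k U (\<lambda>x. det (mat 1 - fst x ** conj_transpose (fst x)))"
  unfolding det_def
  apply (intro CCk_sum CCk_mult CCk_prod CCk_const)
  apply (auto simp: matrix_matrix_mult_def conj_transpose_def mat_def intro!: CCk_neg CCk_diff CCk_const CCk_sum CCk_mult CCk_cnj CCk_coord)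
  done



lemma Ck_N:
  fixes U :: "((complex^'n^'m) \<times> complex) set"
  shows "open U \<Longrightarrow> Ck k U (\<lambda>x. N_Omega1 (fst x))"
  using CCk_det[of U k] unfolding CCk_def N_Omega1_def by blast

definition pwf :: "real \<Rightarrow> nat \<Rightarrow> real \<Rightarrow> real" where
  "pwf a j y = (\<Prod>i<j. (a - real i)) * y powr (a - real j)"

lemma pwf_deriv: "y \<in> {0<..} \<Longrightarrow> (pwf a j has_real_derivative pwf a (Suc j) y) (at y)"
proof -
  assume y: "y \<in> {0<..}"
  have e: "pwf a (Suc j) y = (\<Prod>i<j. (a - real i)) * ((a - real j) * y powr (a - real j - 1))"
    unfolding pwf_def prod.lessThan_Suc by (simp add: mult_ac diff_diff_add add.commute)
  show ?thesis unfolding e using DERIV_cmult[OF has_real_derivative_powr[of y "a - real j"], of "\<Prod>i<j. (a - real i)"] y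
    unfolding pwf_def by simp
qed

definition lnf :: "nat \<Rightarrow> real \<Rightarrow> real" where
  "lnf j y = (if j = 0 then ln y else pwf (-1) (j - 1) y)"

lemma lnf_deriv: "y \<in> {0<..} \<Longrightarrow> (lnf j has_real_derivative lnf (Suc j) y) (at y)"
proof (cases j)
  case 0
  assume y: "y \<in> {0<..}"
  have "(ln has_real_derivative pwf (-1) 0 y) (at y)"
    using y by (auto simp: pwf_def powr_neg_one intro!: derivative_eq_intros)
  moreover have "lnf 0 = ln" by (simp add: lnf_def fun_eq_iff)
  ultimately show ?thesis using 0 by (simp add: lnf_def)
next
  case (Suc i)
  assume y: "y \<in> {0<..}"
  have "(pwf (-1) i has_real_derivative pwf (-1) (Suc i) y) (at y)" using pwf_deriv[OF y] .
  moreover have "lnf j = pwf (-1) i" using Suc by (auto simp: lnf_def fun_eq_iff)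
  ultimately show ?thesis using Suc by (simp add: lnf_def)
qed

definition Uset :: "real \<Rightarrow> ((complex^'n^'m) \<times> complex) set" where
  "Uset \<mu> = {x. 0 < N_Omega1 (fst x) \<and> 0 < N_Omega1 (fst x) powr \<mu> - (cmod (snd x))\<^sup>2}"

lemma Ck_cont: "Ck (Suc k) U f \<Longrightarrow> continuous_on U f"
proof -
  assume "Ck (Suc k) U f"
  then have "\<forall>x\<in>U. f differentiable (at x)" by simp
  then have "f differentiable_on U" unfolding differentiable_on_def using differentiable_at_withinI by blast
  then show ?thesis by (rule differentiable_imp_continuous_on)
qed

lemma Ck_g:
  fixes U :: "((complex^'n^'m) \<times> complex) set"
  assumes "open U" "\<And>x. x \<in> U \<Longrightarrow> 0 < N_Omega1 (fst x)"
  shows "Ck k U (\<lambda>x. N_Omega1 (fst x) powr \<mu> - (cmod (snd x))\<^sup>2)"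
proof -
  have n: "Ck k U (\<lambda>x. N_Omega1 (fst x))" by (rule Ck_N[OF assms(1)])
  have a: "Ck k U (\<lambda>x. pwf \<mu> 0 (N_Omega1 (fst x)))"
    using Ck_comp[OF assms(1), of "{0<..}" "pwf \<mu>" "\<lambda>x. N_Omega1 (fst x)" k 0] pwf_deriv assms n
    by auto
  have b: "Ck k U (\<lambda>x. Re (snd x) * Re (snd x) + Im (snd x) * Im (snd x))"
  proof -
    have r: "Ck k U (\<lambda>x. Re (snd x))"
      by (rule Ck_bl[OF assms(1) bounded_linear_compose[OF bounded_linear_Re bounded_linear_snd]])
    have i: "Ck k U (\<lambda>x. Im (snd x))"
      by (rule Ck_bl[OF assms(1) bounded_linear_compose[OF bounded_linear_Im bounded_linear_snd]])
    show ?thesis by (rule Ck_add[OF assms(1) Ck_mult[OF assms(1) r r] Ck_mult[OF assms(1) i i]])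
  qed
  have "Ck k U (\<lambda>x. pwf \<mu> 0 (N_Omega1 (fst x)) - (Re (snd x) * Re (snd x) + Im (snd x) * Im (snd x)))"
    by (rule Ck_diff[OF assms(1) a b])
  then show ?thesis
    by (rule Ck_cong[OF assms(1), rotated]) (simp add: pwf_def cmod_power2 power2_eq_square[symmetric])
qed

lemma open_Uset: "open (Uset \<mu> :: ((complex^'n^'m) \<times> complex) set)"
proof -
  let ?U1 = "{x :: (complex^'n^'m) \<times> complex. 0 < N_Omega1 (fst x)}"
  have c1: "continuous_on UNIV (\<lambda>x :: (complex^'n^'m) \<times> complex. N_Omega1 (fst x))"
    by (rule Ck_cont[OF Ck_N[of UNIV "Suc 0", OF open_UNIV]])
  have o1: "open ?U1" by (rule open_Collect_less[OF continuous_on_const c1])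
  have c2: "continuous_on ?U1 (\<lambda>x. N_Omega1 (fst x) powr \<mu> - (cmod (snd x))\<^sup>2)"
    by (rule Ck_cont[OF Ck_g[OF o1, of "Suc 0" \<mu>]]) simp
  obtain A where A: "open A" "A \<inter> ?U1 = {x\<in>?U1. 0 < N_Omega1 (fst x) powr \<mu> - (cmod (snd x))\<^sup>2}"
    using open_Collect_less_Int[OF continuous_on_const c2, of 0] by blast
  have "Uset \<mu> = {x\<in>?U1. 0 < N_Omega1 (fst x) powr \<mu> - (cmod (snd x))\<^sup>2}" unfolding Uset_def by blast
  then have "Uset \<mu> = A \<inter> ?U1" using A(2) by simp
  then show ?thesis using A(1) o1 by (simp add: open_Int)
qed

lemma Ck_pot: "Ck k (Uset \<mu>) (hartogs_pot N_Omega1 \<mu> :: (complex^'n^'m) \<times> complex \<Rightarrow> real)"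
proof -
  have o: "open (Uset \<mu> :: ((complex^'n^'m) \<times> complex) set)" by (rule open_Uset)
  have g: "Ck k (Uset \<mu>) (\<lambda>x :: (complex^'n^'m) \<times> complex. N_Omega1 (fst x) powr \<mu> - (cmod (snd x))\<^sup>2)"
    by (rule Ck_g[OF o]) (simp add: Uset_def)
  have "Ck k (Uset \<mu>) (\<lambda>x :: (complex^'n^'m) \<times> complex. lnf 0 (N_Omega1 (fst x) powr \<mu> - (cmod (snd x))\<^sup>2))"
  proof (rule Ck_comp[OF o, of "{0<..}" lnf, OF lnf_deriv _ g])
    fix x :: "(complex^'n^'m) \<times> complex" assume "x \<in> Uset \<mu>"
    then show "N_Omega1 (fst x) powr \<mu> - (cmod (snd x))\<^sup>2 \<in> {0<..}" unfolding Uset_def by simp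
  qed
  then have "Ck k (Uset \<mu>) (\<lambda>x :: (complex^'n^'m) \<times> complex. (-1) * lnf 0 (N_Omega1 (fst x) powr \<mu> - (cmod (snd x))\<^sup>2))"
    using Ck_scale[OF o] by blast
  then show ?thesis
    by (rule Ck_cong[OF o, rotated]) (simp add: lnf_def hartogs_pot_def)
qed



lemma deriv_curve:
  assumes "K differentiable (at (\<gamma> t))" "(\<gamma> has_vector_derivative V) (at t)"
  shows "deriv (\<lambda>s. K (\<gamma> s)) t = Df K (\<gamma> t) V"
proof -
  have "((\<lambda>s. K (\<gamma> s)) has_derivative (\<lambda>h. Df K (\<gamma> t) (h *\<^sub>R V))) (at t)"
    using has_derivative_compose[OF assms(2)[unfolded has_vector_derivative_def] Df_has[OF assms(1)]] .
  moreover have "(\<lambda>h. Df K (\<gamma> t) (h *\<^sub>R V)) = (*) (Df K (\<gamma> t) V)"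
    using linear_scale[OF Df_linear[OF assms(1)]] by (auto simp: fun_eq_iff)
  ultimately have "((\<lambda>s. K (\<gamma> s)) has_field_derivative Df K (\<gamma> t) V) (at t)"
    by (simp add: has_field_derivative_def)
  then show ?thesis by (rule DERIV_imp_deriv)
qed

lemma line_vd: "((\<lambda>s. x + s *\<^sub>R u) has_vector_derivative u) (at s)"
  by (auto intro!: derivative_eq_intros)

lemma dd_Df: "f differentiable (at x) \<Longrightarrow> dd f x u = Df f x u"
  unfolding dd_def using deriv_curve[of f "\<lambda>s. x + s *\<^sub>R u" 0 u, OF _ line_vd] by simp

lemma ev_in:
  assumes "continuous (at t) \<gamma>" "open U" "\<gamma> t \<in> U"
  shows "eventually (\<lambda>s. \<gamma> s \<in> U) (nhds t)"
proof -
  obtain S where "open S" "t \<in> S" "\<forall>x'\<in>S. \<gamma> x' \<in> U"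
    using assms continuous_at_open by metis
  then show ?thesis unfolding eventually_nhds by blast
qed

lemma dd2_D2:
  assumes U: "open U" "x \<in> U" and d: "\<And>y. y \<in> U \<Longrightarrow> \<Phi> differentiable (at y)"
    and d2: "(\<lambda>y. Df \<Phi> y u) differentiable (at x)"
  shows "dd2 \<Phi> x u v = Df (\<lambda>y. Df \<Phi> y u) x v"
proof -
  have "continuous (at 0) (\<lambda>s. x + s *\<^sub>R v)" by (intro continuous_intros)
  then have ev: "eventually (\<lambda>s. x + s *\<^sub>R v \<in> U) (nhds 0)" using ev_in[OF _ U(1), where \<gamma>="\<lambda>s. x + s *\<^sub>R v" and t=0] U(2) by simp
  have "eventually (\<lambda>s. dd \<Phi> (x + s *\<^sub>R v) u = Df \<Phi> (x + s *\<^sub>R v) u) (nhds 0)"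
    by (rule eventually_mono[OF ev]) (simp add: dd_Df d)
  then have "dd2 \<Phi> x u v = deriv (\<lambda>s. Df \<Phi> (x + s *\<^sub>R v) u) 0"
    unfolding dd2_def by (rule deriv_cong_ev) simp
  also have "\<dots> = dd (\<lambda>y. Df \<Phi> y u) x v" by (simp add: dd_def)
  also have "\<dots> = Df (\<lambda>y. Df \<Phi> y u) x v" by (rule dd_Df[OF d2])
  finally show ?thesis .
qed

lemma Df_add_fun:
  assumes "f differentiable (at x)" "g differentiable (at x)"
  shows "(\<lambda>y. f y + g y) differentiable (at x) \<and> Df (\<lambda>y. f y + g y) x = (\<lambda>w. Df f x w + Df g x w)"
proof -
  have "((\<lambda>y. f y + g y) has_derivative (\<lambda>w. Df f x w + Df g x w)) (at x)"
    using assms by (intro has_derivative_add Df_has)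
  then show ?thesis using Df_eq differentiable_def by metis
qed

lemma Df_scale_fun:
  assumes "f differentiable (at x)"
  shows "(\<lambda>y. c * f y) differentiable (at x) \<and> Df (\<lambda>y. c * f y) x = (\<lambda>w. c * Df f x w)"
proof -
  have "((\<lambda>y. c * f y) has_derivative (\<lambda>w. c * Df f x w)) (at x)"
    using assms by (intro has_derivative_mult_right Df_has)
  then show ?thesis using Df_eq differentiable_def by metis
qed



lemma key_linear:
  fixes \<Phi> :: "'a::real_normed_vector \<Rightarrow> real"
  assumes U: "open U" and C: "Ck 3 U \<Phi>" and J: "linear J"
    and g: "\<gamma> differentiable (at t)" "\<gamma> t \<in> U"
  shows "linear (\<lambda>w. kmetric J \<Phi> (\<gamma> t) A w
     + deriv (\<lambda>s. kmetric J \<Phi> (\<gamma> s) (vector_derivative \<gamma> (at t)) w) t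
     - dd (\<lambda>p. kmetric J \<Phi> p (vector_derivative \<gamma> (at t)) (vector_derivative \<gamma> (at t))) (\<gamma> t) w / 2)"
proof -
  define p where "p = \<gamma> t"
  define V where "V = vector_derivative \<gamma> (at t)"
  define D2 where "D2 = (\<lambda>y a b. Df (\<lambda>z. Df \<Phi> z a) y b)"
  define D3 where "D3 = (\<lambda>y a b c. Df (\<lambda>z. D2 z a b) y c)"
  have c0: "\<And>y. y\<in>U \<Longrightarrow> \<Phi> differentiable (at y)"
    and c1: "\<And>y a. y\<in>U \<Longrightarrow> (\<lambda>z. Df \<Phi> z a) differentiable (at y)"
    and c2: "\<And>y a b. y\<in>U \<Longrightarrow> (\<lambda>z. D2 z a b) differentiable (at y)"
    using C by (simp_all add: numeral_3_eq_3 D2_def)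
  have km: "\<And>y a b. y \<in> U \<Longrightarrow> kmetric J \<Phi> y a b = (1/4) * (D2 y a b + D2 y (J a) (J b))"
    unfolding kmetric_def D2_def using dd2_D2[OF U _ c0 c1] by simp
  have pU: "p \<in> U" using g p_def by simp
  have lin2: "\<And>a. linear (D2 p a)" using Df_linear[OF c1[OF pU]] D2_def by simp
  have D3add: "\<And>a b1 b2 c. D3 p a (b1 + b2) c = D3 p a b1 c + D3 p a b2 c"
  proof -
    fix a b1 b2 c
    have e: "\<And>y. y \<in> U \<Longrightarrow> D2 y a b1 + D2 y a b2 = D2 y a (b1 + b2)"
      using Df_linear[OF c1] linear_add unfolding D2_def by metis
    have s: "(\<lambda>z. D2 z a b1 + D2 z a b2) differentiable (at p) \<and>
        Df (\<lambda>z. D2 z a b1 + D2 z a b2) p = (\<lambda>w. Df (\<lambda>z. D2 z a b1) p w + Df (\<lambda>z. D2 z a b2) p w)"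
      by (rule Df_add_fun[OF c2[OF pU] c2[OF pU]])
    have "Df (\<lambda>z. D2 z a (b1+b2)) p = Df (\<lambda>z. D2 z a b1 + D2 z a b2) p"
      using Df_cong[OF U pU, of "\<lambda>z. D2 z a b1 + D2 z a b2" "\<lambda>z. D2 z a (b1+b2)"] s e by blast
    then show "D3 p a (b1 + b2) c = D3 p a b1 c + D3 p a b2 c" using s unfolding D3_def by simp
  qed
  have D3scale: "\<And>a r b c. D3 p a (r *\<^sub>R b) c = r * D3 p a b c"
  proof -
    fix a r b c
    have e: "\<And>y. y \<in> U \<Longrightarrow> r * D2 y a b = D2 y a (r *\<^sub>R b)"
      using Df_linear[OF c1] linear_scale unfolding D2_def by (metis real_scaleR_def)
    have s: "(\<lambda>z. r * D2 z a b) differentiable (at p) \<and>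
        Df (\<lambda>z. r * D2 z a b) p = (\<lambda>w. r * Df (\<lambda>z. D2 z a b) p w)"
      by (rule Df_scale_fun[OF c2[OF pU]])
    have "Df (\<lambda>z. D2 z a (r *\<^sub>R b)) p = Df (\<lambda>z. r * D2 z a b) p"
      using Df_cong[OF U pU, of "\<lambda>z. r * D2 z a b" "\<lambda>z. D2 z a (r *\<^sub>R b)"] s e by blast
    then show "D3 p a (r *\<^sub>R b) c = r * D3 p a b c" using s unfolding D3_def by simp
  qed
  have gv: "(\<gamma> has_vector_derivative V) (at t)" using g(1) V_def vector_derivative_works by blast
  have ev: "eventually (\<lambda>s. \<gamma> s \<in> U) (nhds t)"
    using ev_in[OF differentiable_imp_continuous_within[OF g(1)] U g(2)] .
  have T2: "\<And>w. deriv (\<lambda>s. kmetric J \<Phi> (\<gamma> s) V w) t = (1/4) * (D3 p V w V + D3 p (J V) (J w) V)"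
  proof -
    fix w
    define K where "K = (\<lambda>y. (1/4) * (D2 y V w + D2 y (J V) (J w)))"
    have "eventually (\<lambda>s. kmetric J \<Phi> (\<gamma> s) V w = K (\<gamma> s)) (nhds t)"
      by (rule eventually_mono[OF ev]) (simp add: km K_def)
    then have "deriv (\<lambda>s. kmetric J \<Phi> (\<gamma> s) V w) t = deriv (\<lambda>s. K (\<gamma> s)) t"
      by (rule deriv_cong_ev) simp
    moreover have a: "(\<lambda>y. D2 y V w + D2 y (J V) (J w)) differentiable (at p) \<and>
       Df (\<lambda>y. D2 y V w + D2 y (J V) (J w)) p = (\<lambda>c. D3 p V w c + D3 p (J V) (J w) c)"
      using Df_add_fun[OF c2[OF pU] c2[OF pU]] unfolding D3_def by simp
    moreover have "K differentiable (at p) \<and> Df K p = (\<lambda>c. (1/4) * (D3 p V w c + D3 p (J V) (J w) c))"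
      using Df_scale_fun[OF a[THEN conjunct1], of "1/4"] a unfolding K_def by simp
    ultimately show "deriv (\<lambda>s. kmetric J \<Phi> (\<gamma> s) V w) t = (1/4) * (D3 p V w V + D3 p (J V) (J w) V)"
      using deriv_curve[of K \<gamma> t V] gv p_def by simp
  qed
  define H where "H = (\<lambda>y. kmetric J \<Phi> y V V)"
  define H' where "H' = (\<lambda>y. (1/4) * (D2 y V V + D2 y (J V) (J V)))"
  have H'd: "H' differentiable (at p)"
    unfolding H'_def using Df_scale_fun Df_add_fun[OF c2[OF pU] c2[OF pU]] by blast
  have Hd: "H differentiable (at p) \<and> Df H p = Df H' p"
    by (rule Df_cong[OF U pU _ H'd]) (simp add: H_def H'_def km)
  have T3: "\<And>w. dd H p w = Df H p w" using dd_Df Hd by blast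
  have linH: "linear (Df H p)" using Df_linear Hd by blast
  have eq: "(\<lambda>w. kmetric J \<Phi> (\<gamma> t) A w
     + deriv (\<lambda>s. kmetric J \<Phi> (\<gamma> s) (vector_derivative \<gamma> (at t)) w) t
     - dd (\<lambda>p. kmetric J \<Phi> p (vector_derivative \<gamma> (at t)) (vector_derivative \<gamma> (at t))) (\<gamma> t) w / 2)
     = (\<lambda>w. (1/4) * (D2 p A w + D2 p (J A) (J w)) + (1/4) * (D3 p V w V + D3 p (J V) (J w) V) - Df H p w / 2)"
    unfolding p_def[symmetric] V_def[symmetric] H_def[symmetric] by (rule ext) (simp only: T2 T3 km[OF pU])
  show ?thesis unfolding eq
  proof (rule linearI)
    fix x y
    show "(1/4) * (D2 p A (x + y) + D2 p (J A) (J (x + y))) + (1/4) * (D3 p V (x + y) V + D3 p (J V) (J (x + y)) V) - Df H p (x + y) / 2 =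
      ((1/4) * (D2 p A x + D2 p (J A) (J x)) + (1/4) * (D3 p V x V + D3 p (J V) (J x) V) - Df H p x / 2) +
      ((1/4) * (D2 p A y + D2 p (J A) (J y)) + (1/4) * (D3 p V y V + D3 p (J V) (J y) V) - Df H p y / 2)"
      by (simp add: linear_add[OF J] linear_add[OF lin2] linear_add[OF linH] D3add algebra_simps)
  next
    fix c x
    show "(1/4) * (D2 p A (c *\<^sub>R x) + D2 p (J A) (J (c *\<^sub>R x))) + (1/4) * (D3 p V (c *\<^sub>R x) V + D3 p (J V) (J (c *\<^sub>R x)) V) - Df H p (c *\<^sub>R x) / 2 =
      c *\<^sub>R ((1/4) * (D2 p A x + D2 p (J A) (J x)) + (1/4) * (D3 p V x V + D3 p (J V) (J x) V) - Df H p x / 2)"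
      by (simp add: linear_scale[OF J] linear_scale[OF lin2] linear_scale[OF linH] D3scale algebra_simps)
  qed
qed



lemma dd_transfer:
  assumes "\<And>x. H' (f x) = H x" "\<And>x y. f (x + y) = f x + f y" "\<And>c x. f (c *\<^sub>R x) = c *\<^sub>R f x"
  shows "dd H' (f p) (f w) = dd H p w"
proof -
  have "(\<lambda>t. H' (f p + t *\<^sub>R f w)) = (\<lambda>t. H (p + t *\<^sub>R w))"
    by (rule ext) (metis assms)
  then show ?thesis by (simp add: dd_def)
qed

lemma dd2_transfer:
  assumes "\<And>x. H' (f x) = H x" "\<And>x y. f (x + y) = f x + f y" "\<And>c x. f (c *\<^sub>R x) = c *\<^sub>R f x"
  shows "dd2 H' (f p) (f u) (f v) = dd2 H p u v"
proof -
  have "(\<lambda>s. dd H' (f p + s *\<^sub>R f v) (f u)) = (\<lambda>s. dd H (p + s *\<^sub>R v) u)"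
  proof (rule ext)
    fix s
    have "f p + s *\<^sub>R f v = f (p + s *\<^sub>R v)" using assms by metis
    then show "dd H' (f p + s *\<^sub>R f v) (f u) = dd H (p + s *\<^sub>R v) u"
      using dd_transfer[where H=H and f=f and H'=H', OF assms] by simp
  qed
  then show ?thesis by (simp add: dd2_def)
qed

lemma km_transfer:
  assumes "\<And>x. H' (f x) = H x" "\<And>x y. f (x + y) = f x + f y" "\<And>c x. f (c *\<^sub>R x) = c *\<^sub>R f x"
    "\<And>u. J' (f u) = f (J u)"
  shows "kmetric J' H' (f p) (f u) (f v) = kmetric J H p u v"
  unfolding kmetric_def using dd2_transfer[where H=H and f=f and H'=H', OF assms(1-3)] assms(4) by simp

lemma diag_prod:
  assumes "inj \<iota>"
  shows "diag_emb \<iota> z ** conj_transpose (diag_emb \<iota> z) = (\<chi> i j. if i = j then z$i * cnj (z$i) else 0)"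
proof -
  have "\<And>i j. (\<Sum>k\<in>UNIV. (if k = \<iota> i then z $ i else 0) * cnj (if k = \<iota> j then z $ j else 0))
      = (if i = j then z$i * cnj (z$i) else 0)"
  proof -
    fix i j
    have "(\<Sum>k\<in>UNIV. (if k = \<iota> i then z $ i else 0) * cnj (if k = \<iota> j then z $ j else 0))
       = (\<Sum>k\<in>UNIV. if k = \<iota> i then z $ i * cnj (if \<iota> i = \<iota> j then z $ j else 0) else 0)"
      by (rule sum.cong) auto
    also have "\<dots> = z $ i * cnj (if \<iota> i = \<iota> j then z $ j else 0)" by simp
    finally show "?thesis i j" using assms by (auto simp: inj_eq)
  qed
  then show ?thesis
    by (simp add: vec_eq_iff matrix_matrix_mult_def conj_transpose_def diag_emb_def)
qed

lemma diag_M: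
  assumes "inj \<iota>"
  shows "mat 1 - diag_emb \<iota> z ** conj_transpose (diag_emb \<iota> z) =
    (\<chi> i j. if i = j then complex_of_real (1 - (cmod (z$i))\<^sup>2) else 0)"
proof -
  have w: "\<And>w::complex. w * cnj w = complex_of_real ((cmod w)\<^sup>2)" by (rule complex_norm_square[symmetric])
  show ?thesis unfolding diag_prod[OF assms] by (simp add: vec_eq_iff mat_def w)
qed

lemma N_diag:
  assumes "inj \<iota>"
  shows "N_Omega1 (diag_emb \<iota> z) = N_poly z"
proof -
  have "det (mat 1 - diag_emb \<iota> z ** conj_transpose (diag_emb \<iota> z)) = (\<Prod>i\<in>UNIV. complex_of_real (1 - (cmod (z$i))\<^sup>2))"
    unfolding diag_M[OF assms] by (subst det_diagonal) simp_all
  also have "\<dots> = complex_of_real (\<Prod>i\<in>UNIV. 1 - (cmod (z$i))\<^sup>2)" by (rule of_real_prod[symmetric])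
  finally show ?thesis unfolding N_Omega1_def N_poly_def by (simp only: Re_complex_of_real)
qed

lemma diag_Omega1:
  fixes z :: "complex^'m::finite" and \<iota> :: "'m \<Rightarrow> 'n::finite"
  assumes "inj \<iota>" "z \<in> polydisk"
  shows "diag_emb \<iota> z \<in> Omega1"
proof -
  have zi: "\<And>i. (cmod (z$i))\<^sup>2 < 1" using assms(2) unfolding polydisk_def
    by (simp add: abs_square_less_1)
  define M :: "complex^'m^'m" where "M = (\<chi> i j. if i = j then complex_of_real (1 - (cmod (z$i))\<^sup>2) else 0)"
  have h: "\<forall>i j. M $ i $ j = cnj (M $ j $ i)" by (simp add: M_def)
  have p: "\<forall>v. v \<noteq> 0 \<longrightarrow> 0 < Re (\<Sum>i\<in>UNIV. \<Sum>j\<in>UNIV. cnj (v $ i) * M $ i $ j * v $ j)"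
  proof (intro allI impI)
    fix v :: "complex^'m" assume "v \<noteq> 0"
    then obtain i where vi: "v $ i \<noteq> 0" by (auto simp: vec_eq_iff)
    have e: "\<And>i. Re (\<Sum>j\<in>UNIV. cnj (v $ i) * M $ i $ j * v $ j)
       = (1 - (cmod (z $ i))\<^sup>2) * (cmod (v$i))\<^sup>2"
    proof -
      fix i
      have "(\<Sum>j\<in>UNIV. cnj (v $ i) * M $ i $ j * v $ j)
        = (\<Sum>j\<in>UNIV. if i = j then cnj (v $ i) * complex_of_real (1 - (cmod (z $ i))\<^sup>2) * v $ i else 0)"
        by (rule sum.cong) (auto simp: M_def)
      also have "\<dots> = cnj (v $ i) * complex_of_real (1 - (cmod (z $ i))\<^sup>2) * v $ i"
        by simp
      also have "\<dots> = complex_of_real ((1 - (cmod (z $ i))\<^sup>2) * (cmod (v$i))\<^sup>2)"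
        using complex_norm_square[of "v$i"] by (simp add: mult_ac)
      finally show "?thesis i" by simp
    qed
    show "0 < Re (\<Sum>i\<in>UNIV. \<Sum>j\<in>UNIV. cnj (v $ i) * M $ i $ j * v $ j)"
      unfolding Re_sum[of "\<lambda>i. \<Sum>j\<in>UNIV. cnj (v $ i) * M $ i $ j * v $ j"] e
      by (rule sum_pos2[of UNIV i]) (use zi vi in \<open>auto intro!: mult_nonneg_nonneg simp: less_imp_le\<close>)
  qed
  have "pos_def_herm M" unfolding pos_def_herm_def using h p by blast
  then show ?thesis unfolding Omega1_def M_def using diag_M[OF assms(1), of z] by simp
qed



lemma det_scale2:
  fixes M :: "'a::comm_ring_1^'m^'m"
  shows "det (\<chi> a c. s a * s c * M $ a $ c) = (\<Prod>a\<in>UNIV. s a) * (\<Prod>a\<in>UNIV. s a) * det M"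
proof -
  have e1: "(\<chi> a c. s a * s c * M $ a $ c) = (\<chi> a. s a *s (\<chi> c. s c * M $ a $ c))"
    by (simp add: vec_eq_iff mult.assoc)
  have e2: "(\<chi> a c. s c * M $ a $ c) = transpose (\<chi> c. s c *s (\<chi> a. M $ a $ c))"
    by (simp add: vec_eq_iff transpose_def)
  have e3: "(\<chi> c a. M $ a $ c) = transpose M" by (simp add: vec_eq_iff transpose_def)
  have "det (\<chi> a c. s a * s c * M $ a $ c) = (\<Prod>a\<in>UNIV. s a) * det (\<chi> a c. s c * M $ a $ c)"
    unfolding e1 det_rows_mul by simp
  also have "det (\<chi> a c. s c * M $ a $ c) = (\<Prod>a\<in>UNIV. s a) * det M"
    unfolding e2 det_transpose det_rows_mul by (simp add: e3)
  finally show ?thesis by (simp add: mult.assoc)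
qed

definition sig :: "('m \<Rightarrow> complex) \<Rightarrow> ('n \<Rightarrow> complex) \<Rightarrow> (complex^'n^'m) \<times> complex \<Rightarrow> (complex^'n^'m) \<times> complex" where
  "sig s t x = ((\<chi> a b. s a * t b * fst x $ a $ b), snd x)"

lemma N_sig:
  fixes s :: "'m::finite \<Rightarrow> complex" and t :: "'n::finite \<Rightarrow> complex"
  assumes s: "\<And>a. s a * s a = 1" "\<And>a. cnj (s a) = s a"
    and t: "\<And>b. t b * t b = 1" "\<And>b. cnj (t b) = t b"
  shows "N_Omega1 (fst (sig s t x)) = N_Omega1 (fst x)"
proof -
  define Z where "Z = fst x"
  define M where "M = mat 1 - Z ** conj_transpose Z"
  have "\<And>a c. (\<Sum>b\<in>UNIV. s a * t b * Z $ a $ b * cnj (s c * t b * Z $ c $ b))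
     = s a * s c * (\<Sum>b\<in>UNIV. Z $ a $ b * cnj (Z $ c $ b))"
  proof -
    fix a c
    have "\<And>b. s a * t b * Z $ a $ b * cnj (s c * t b * Z $ c $ b) = s a * s c * (Z $ a $ b * cnj (Z $ c $ b))"
    proof -
      fix b
      have "s a * t b * Z $ a $ b * cnj (s c * t b * Z $ c $ b) = s a * s c * (t b * t b) * (Z $ a $ b * cnj (Z $ c $ b))"
        using s(2) t(2) by (simp add: mult_ac)
      then show "?thesis b" using t(1) by simp
    qed
    then show "?thesis a c" by (simp only: sum_distrib_left)
  qed
  then have "mat 1 - fst (sig s t x) ** conj_transpose (fst (sig s t x)) = (\<chi> a c. s a * s c * M $ a $ c)"
    unfolding M_def Z_def sig_def
    by (auto simp: vec_eq_iff matrix_matrix_mult_def conj_transpose_def mat_def right_diff_distrib s(1))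
  then have "det (mat 1 - fst (sig s t x) ** conj_transpose (fst (sig s t x))) = det M"
    using det_scale2[of s M] by (simp add: prod.distrib[symmetric] s(1))
  then show ?thesis unfolding N_Omega1_def M_def Z_def by simp
qed



context
  fixes \<iota> :: "'m::finite \<Rightarrow> 'n::finite"
begin

lemma f_add: "f_map \<iota> (x + y) = f_map \<iota> x + f_map \<iota> y"
  by (simp add: f_map_def diag_emb_def vec_eq_iff)

lemma f_scale: "f_map \<iota> (c *\<^sub>R x) = c *\<^sub>R f_map \<iota> x"
  by (simp add: f_map_def diag_emb_def vec_eq_iff)

lemma f_lin: "linear (f_map \<iota>)"
  by (rule linearI) (simp_all add: f_add f_scale)

lemma f_bl: "bounded_linear (f_map \<iota>)"
  using f_lin linear_conv_bounded_linear by blast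

lemma f_hasd: "(f_map \<iota> has_derivative f_map \<iota>) (at p)"
  by (rule bounded_linear_imp_has_derivative[OF f_bl])

lemma f_fd: "frechet_derivative (f_map \<iota>) (at p) = f_map \<iota>"
  using frechet_derivative_at[OF f_hasd] by simp

lemma f_J: "J_mat (f_map \<iota> u) = f_map \<iota> (J_poly u)"
  by (simp add: f_map_def diag_emb_def J_mat_def J_poly_def vec_eq_iff)

lemma f_pot: "inj \<iota> \<Longrightarrow> hartogs_pot N_Omega1 \<mu> (f_map \<iota> x) = hartogs_pot N_poly \<mu> x"
  by (simp add: hartogs_pot_def f_map_def N_diag)

end

lemma J_lin: "linear J_mat"
  by (rule linearI) (simp_all add: J_mat_def vec_eq_iff algebra_simps)

lemma sig_add: "sig s t (x + y) = sig s t x + sig s t y"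
  by (simp add: sig_def vec_eq_iff algebra_simps)

lemma sig_scale: "sig s t (c *\<^sub>R x) = c *\<^sub>R sig s t x"
  by (simp add: sig_def vec_eq_iff scaleR_conv_of_real mult_ac)

lemma sig_J: "J_mat (sig s t u) = sig s t (J_mat u)"
  by (simp add: sig_def J_mat_def vec_eq_iff mult_ac)

definition si :: "'m \<Rightarrow> 'm \<Rightarrow> complex" where "si i a = (if a = i then -1 else 1)"
definition ti :: "('m \<Rightarrow> 'n) \<Rightarrow> 'm \<Rightarrow> 'n \<Rightarrow> complex" where "ti \<iota> i b = (if b = \<iota> i then -1 else 1)"

lemma sig_invol: "sig (si i) (ti \<iota> i) (sig (si i) (ti \<iota> i) x) = x"
  by (simp add: sig_def si_def ti_def vec_eq_iff prod_eq_iff)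

lemma sig_f: "inj \<iota> \<Longrightarrow> sig (si i) (ti \<iota> i) (f_map \<iota> y) = f_map \<iota> y"
  by (auto simp add: sig_def si_def ti_def vec_eq_iff f_map_def diag_emb_def inj_eq)

lemma sig_pot: "hartogs_pot N_Omega1 \<mu> (sig (si i) (ti \<iota> i) x) = hartogs_pot N_Omega1 \<mu> x"
proof -
  have "N_Omega1 (fst (sig (si i) (ti \<iota> i) x)) = N_Omega1 (fst x)"
    by (rule N_sig) (simp_all add: si_def ti_def)
  then show ?thesis by (simp add: hartogs_pot_def sig_def)
qed

definition Pw :: "('m \<Rightarrow> 'n) \<Rightarrow> (complex^'n^'m) \<times> complex \<Rightarrow> (complex^'m) \<times> complex" where
  "Pw \<iota> w = ((\<chi> a. fst w $ a $ \<iota> a), snd w)"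
definition Rw :: "('m \<Rightarrow> 'n) \<Rightarrow> 'm \<Rightarrow> (complex^'n^'m) \<times> complex \<Rightarrow> (complex^'n^'m) \<times> complex" where
  "Rw \<iota> i w = ((\<chi> a b. if a = i \<and> b \<noteq> \<iota> a then fst w $ a $ b else 0), 0)"

lemma decomp: "w = f_map \<iota> (Pw \<iota> w) + (\<Sum>i\<in>UNIV. Rw \<iota> i w)"
proof -
  have "\<And>a b. fst w $ a $ b = (if b = \<iota> a then fst w $ a $ \<iota> a else 0) + (\<Sum>i\<in>UNIV. if a = i \<and> b \<noteq> \<iota> a then fst w $ a $ b else 0)"
  proof -
    fix a b
    have "(\<Sum>i\<in>UNIV. if a = i \<and> b \<noteq> \<iota> a then fst w $ a $ b else 0) = (\<Sum>i\<in>UNIV. if a = i then (if b \<noteq> \<iota> a then fst w $ a $ b else 0) else 0)"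
      by (rule sum.cong) auto
    also have "\<dots> = (if b \<noteq> \<iota> a then fst w $ a $ b else 0)" by simp
    finally show "?thesis a b" by auto
  qed
  then show ?thesis
    by (simp add: prod_eq_iff vec_eq_iff f_map_def diag_emb_def Pw_def Rw_def fst_sum snd_sum)
qed

lemma sig_R: "sig (si i) (ti \<iota> i) (Rw \<iota> i w) = - Rw \<iota> i w"
  by (auto simp add: sig_def si_def ti_def Rw_def vec_eq_iff)



lemma vd_comp:
  assumes "bounded_linear L" "(g has_vector_derivative v) (at s)"
  shows "((\<lambda>x. L (g x)) has_vector_derivative L v) (at s)"
proof -
  have "((\<lambda>x. L (g x)) has_derivative (\<lambda>h. L (h *\<^sub>R v))) (at s)"
    using has_derivative_compose[OF assms(2)[unfolded has_vector_derivative_def] bounded_linear_imp_has_derivative[OF assms(1)]] .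
  then show ?thesis unfolding has_vector_derivative_def using linear_scale[OF bounded_linear.linear[OF assms(1)]] by simp
qed

lemma Npoly_pos: "z \<in> polydisk \<Longrightarrow> 0 < N_poly z"
  unfolding N_poly_def polydisk_def
  by (rule prod_pos) (simp add: abs_square_less_1)

theorem lemma3p2:
  fixes \<mu> :: real and \<iota> :: "'m::finite \<Rightarrow> 'n::finite"
  assumes "inj \<iota>" and "\<mu> > 0"
  shows "kahler_immersion J_poly (hartogs polydisk N_poly \<mu>) (hartogs_pot N_poly \<mu>)
           J_mat (hartogs Omega1 N_Omega1 \<mu>) (hartogs_pot N_Omega1 \<mu>) (f_map \<iota>)
         \<and> totally_geodesic (hartogs polydisk N_poly \<mu>)
           J_mat (hartogs Omega1 N_Omega1 \<mu>) (hartogs_pot N_Omega1 \<mu>) (f_map \<iota>)"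
proof -
  define f where "f = f_map \<iota>"
  define \<Phi>' where "\<Phi>' = (hartogs_pot N_Omega1 \<mu> :: (complex^'n^'m) \<times> complex \<Rightarrow> real)"
  define G where "G = kmetric J_mat \<Phi>'"
  have \<Phi>f: "\<And>x. \<Phi>' (f x) = hartogs_pot N_poly \<mu> x" unfolding \<Phi>'_def f_def using f_pot[OF assms(1)] .
  have fadd: "\<And>x y. f (x + y) = f x + f y" unfolding f_def by (rule f_add)
  have fscale: "\<And>c x. f (c *\<^sub>R x) = c *\<^sub>R f x" unfolding f_def by (rule f_scale)
  have fJ: "\<And>u. J_mat (f u) = f (J_poly u)" unfolding f_def by (rule f_J)
  have pb: "\<And>p u v. pullback_metric G f p u v = G (f p) (f u) (f v)"
    unfolding pullback_metric_def f_def f_fd ..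
  have km: "\<And>p u v. pullback_metric G f p u v = kmetric J_poly (hartogs_pot N_poly \<mu>) p u v"
  proof -
    fix p u v
    have "pullback_metric G f p u v = G (f p) (f u) (f v)" by (rule pb)
    also have "\<dots> = kmetric J_poly (hartogs_pot N_poly \<mu>) p u v"
      unfolding G_def by (rule km_transfer[where H'=\<Phi>' and H="hartogs_pot N_poly \<mu>" and f=f and J'=J_mat and J=J_poly, OF \<Phi>f fadd fscale fJ])
    finally show "pullback_metric G f p u v = kmetric J_poly (hartogs_pot N_poly \<mu>) p u v" .
  qed
  have img: "\<And>x. x \<in> hartogs polydisk N_poly \<mu> \<Longrightarrow> f x \<in> hartogs Omega1 N_Omega1 \<mu>"
  proof -
    fix x :: "(complex^'m) \<times> complex" assume "x \<in> hartogs polydisk N_poly \<mu>"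
    then show "f x \<in> hartogs Omega1 N_Omega1 \<mu>"
      by (cases x) (simp add: hartogs_def f_def f_map_def diag_Omega1[OF assms(1)] N_diag[OF assms(1)])
  qed
  have holo: "holomorphic_map J_poly J_mat (hartogs polydisk N_poly \<mu>) f"
    unfolding holomorphic_map_def using f_hasd fJ f_def by metis
  have part1: "kahler_immersion J_poly (hartogs polydisk N_poly \<mu>) (hartogs_pot N_poly \<mu>)
           J_mat (hartogs Omega1 N_Omega1 \<mu>) \<Phi>' f"
    unfolding kahler_immersion_def using img holo km[unfolded G_def] by blast
  have fbl: "bounded_linear f" unfolding f_def by (rule f_bl)
  have fvd: "\<And>g s. g differentiable (at s) \<Longrightarrow> ((f \<circ> g) has_vector_derivative f (vector_derivative g (at s))) (at s)"
    using vd_comp[OF fbl] vector_derivative_works unfolding comp_def by blast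
  have lin: "linear f" using fbl bounded_linear.linear by blast
  have part2: "totally_geodesic (hartogs polydisk N_poly \<mu>) J_mat (hartogs Omega1 N_Omega1 \<mu>) \<Phi>' f"
    unfolding totally_geodesic_def
  proof (intro allI impI)
    fix a b and \<gamma> :: "real \<Rightarrow> (complex^'m) \<times> complex"
    assume geo: "geodesic (hartogs polydisk N_poly \<mu>) (pullback_metric (kmetric J_mat \<Phi>') f) a b \<gamma>"
    have Hs: "\<And>s. s \<in> {a<..<b} \<Longrightarrow> \<gamma> s \<in> hartogs polydisk N_poly \<mu> \<and> \<gamma> differentiable (at s) \<and>
        (\<lambda>s. vector_derivative \<gamma> (at s)) differentiable (at s)"
      using geo unfolding geodesic_def by blast
    define \<gamma>' where "\<gamma>' = f \<circ> \<gamma>"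
    define \<gamma>1 where "\<gamma>1 = (\<lambda>s. vector_derivative \<gamma> (at s))"
    have vdeq: "\<And>s. s \<in> {a<..<b} \<Longrightarrow> vector_derivative \<gamma>' (at s) = f (\<gamma>1 s)"
      unfolding \<gamma>'_def \<gamma>1_def using fvd Hs vector_derivative_at by blast
    show "geodesic (hartogs Omega1 N_Omega1 \<mu>) (kmetric J_mat \<Phi>') a b (f \<circ> \<gamma>)"
      unfolding geodesic_def \<gamma>'_def[symmetric]
    proof (intro ballI conjI allI)
      fix t assume t: "t \<in> {a<..<b}"
      have ht: "\<gamma> t \<in> hartogs polydisk N_poly \<mu>" "\<gamma> differentiable (at t)" "\<gamma>1 differentiable (at t)"
        using Hs[OF t] \<gamma>1_def by auto
      have eqt: "\<forall>w. pullback_metric (kmetric J_mat \<Phi>') f (\<gamma> t) (vector_derivative \<gamma>1 (at t)) w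
              + deriv (\<lambda>s. pullback_metric (kmetric J_mat \<Phi>') f (\<gamma> s) (vector_derivative \<gamma> (at t)) w) t
              - dd (\<lambda>p. pullback_metric (kmetric J_mat \<Phi>') f p (vector_derivative \<gamma> (at t)) (vector_derivative \<gamma> (at t))) (\<gamma> t) w / 2
              = 0"
        using geo t unfolding geodesic_def \<gamma>1_def by blast
      show "\<gamma>' t \<in> hartogs Omega1 N_Omega1 \<mu>" unfolding \<gamma>'_def using img ht(1) by simp
      have g'd: "(\<gamma>' has_vector_derivative f (\<gamma>1 t)) (at t)" unfolding \<gamma>'_def \<gamma>1_def using fvd ht(2) by blast
      then show "\<gamma>' differentiable (at t)" using differentiableI_vector by blast
      define A where "A = vector_derivative \<gamma>1 (at t)"
      have "((\<lambda>s. f (\<gamma>1 s)) has_vector_derivative f A) (at t)"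
        using vd_comp[OF fbl] ht(3) vector_derivative_works A_def by blast
      then have "((\<lambda>s. vector_derivative \<gamma>' (at s)) has_vector_derivative f A) (at t)"
        unfolding has_vector_derivative_def
        by (rule has_derivative_transform_within_open[where s="{a<..<b}"]) (use t vdeq in auto)
      then show "(\<lambda>s. vector_derivative \<gamma>' (at s)) differentiable (at t)" using differentiableI_vector by blast
      have A2: "vector_derivative (\<lambda>s. vector_derivative \<gamma>' (at s)) (at t) = f A"
        using vector_derivative_at \<open>((\<lambda>s. vector_derivative \<gamma>' (at s)) has_vector_derivative f A) (at t)\<close> by blast
      fix w
      define V where "V = vector_derivative \<gamma> (at t)"
      have V': "vector_derivative \<gamma>' (at t) = f V" using vdeq[OF t] V_def \<gamma>1_def by simp
      define E where "E = (\<lambda>w. G (\<gamma>' t) (f A) w + deriv (\<lambda>s. G (\<gamma>' s) (vector_derivative \<gamma>' (at t)) w) t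
            - dd (\<lambda>p. G p (vector_derivative \<gamma>' (at t)) (vector_derivative \<gamma>' (at t))) (\<gamma>' t) w / 2)"
      have \<gamma>'U: "\<gamma>' t \<in> Uset \<mu>"
      proof -
        obtain z c where zc: "\<gamma> t = (z, c)" by fastforce
        then have zc2: "z \<in> polydisk" "(cmod c)\<^sup>2 < N_poly z powr \<mu>" using ht(1) by (auto simp: hartogs_def)
        show ?thesis unfolding Uset_def \<gamma>'_def using zc zc2 Npoly_pos[OF zc2(1)]
          by (simp add: f_def f_map_def N_diag[OF assms(1)])
      qed
      have linE: "linear E"
        unfolding E_def G_def \<Phi>'_def
        by (rule key_linear[OF open_Uset Ck_pot J_lin \<open>\<gamma>' differentiable (at t)\<close> \<gamma>'U])
      have Ef: "\<And>w1. E (f w1) = 0"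
      proof -
        fix w1
        have dt: "dd (\<lambda>p. G (f p) (f V) (f V)) (\<gamma> t) w1 = dd (\<lambda>q. G q (f V) (f V)) (f (\<gamma> t)) (f w1)"
          by (rule dd_transfer[where H'="\<lambda>q. G q (f V) (f V)" and H="\<lambda>p. G (f p) (f V) (f V)" and f=f, OF _ fadd fscale, symmetric]) simp
        show "E (f w1) = 0"
          using eqt[rule_format, of w1] unfolding E_def V' A_def[symmetric] V_def[symmetric] G_def[symmetric] pb dt
          by (simp add: \<gamma>'_def)
      qed
      have Esig: "\<And>i x. E (sig (si i) (ti \<iota> i) x) = E x"
      proof -
        fix i x
        define \<sigma> where "\<sigma> = sig (si i) (ti \<iota> i)"
        have G\<sigma>: "\<And>p u v. G (\<sigma> p) (\<sigma> u) (\<sigma> v) = G p u v"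
          unfolding G_def \<sigma>_def \<Phi>'_def
          by (rule km_transfer[where H'="hartogs_pot N_Omega1 \<mu>" and H="hartogs_pot N_Omega1 \<mu>" and f="sig (si i) (ti \<iota> i)" and J'=J_mat and J=J_mat, OF sig_pot sig_add sig_scale sig_J])
        have \<sigma>f: "\<And>y. \<sigma> (f y) = f y" unfolding \<sigma>_def f_def by (rule sig_f[OF assms(1)])
        have t1: "G (\<gamma>' t) (f A) (\<sigma> x) = G (\<gamma>' t) (f A) x"
          using G\<sigma>[of "\<gamma>' t" "f A" x] \<sigma>f unfolding \<gamma>'_def by simp
        have t2: "(\<lambda>s. G (\<gamma>' s) (f V) (\<sigma> x)) = (\<lambda>s. G (\<gamma>' s) (f V) x)"
          using G\<sigma> \<sigma>f unfolding \<gamma>'_def by (metis comp_apply)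
        have t3: "dd (\<lambda>p. G p (f V) (f V)) (\<gamma>' t) (\<sigma> x) = dd (\<lambda>p. G p (f V) (f V)) (\<gamma>' t) x"
        proof -
          have "dd (\<lambda>p. G p (f V) (f V)) (\<sigma> (\<gamma>' t)) (\<sigma> x) = dd (\<lambda>p. G p (f V) (f V)) (\<gamma>' t) x"
            unfolding \<sigma>_def by (rule dd_transfer[where H'="\<lambda>p. G p (f V) (f V)" and H="\<lambda>p. G p (f V) (f V)" and f="sig (si i) (ti \<iota> i)", OF _ sig_add sig_scale]) (metis G\<sigma> \<sigma>f \<sigma>_def)
          then show ?thesis using \<sigma>f unfolding \<gamma>'_def by simp
        qed
        show "E (\<sigma> x) = E x" unfolding E_def V' using t1 t2 t3 by simp
      qed
      have ER: "\<And>i. E (Rw \<iota> i w) = 0"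
      proof -
        fix i
        have "E (Rw \<iota> i w) = E (- Rw \<iota> i w)" using Esig[of i "Rw \<iota> i w"] sig_R by metis
        also have "\<dots> = - E (Rw \<iota> i w)" by (rule linear_neg[OF linE])
        finally show "E (Rw \<iota> i w) = 0" by simp
      qed
      have "E w = E (f (Pw \<iota> w)) + (\<Sum>i\<in>UNIV. E (Rw \<iota> i w))"
        using decomp[of w \<iota>] linear_add[OF linE] linear_sum[OF linE] unfolding f_def by (metis comp_def)
      then have "E w = 0" using Ef ER by simp
      then show "kmetric J_mat \<Phi>' (\<gamma>' t) (vector_derivative (\<lambda>s. vector_derivative \<gamma>' (at s)) (at t)) w +
         deriv (\<lambda>s. kmetric J_mat \<Phi>' (\<gamma>' s) (vector_derivative \<gamma>' (at t)) w) t -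
         dd (\<lambda>p. kmetric J_mat \<Phi>' p (vector_derivative \<gamma>' (at t)) (vector_derivative \<gamma>' (at t))) (\<gamma>' t) w / 2 = 0"
        unfolding A2 E_def G_def by simp
    qed
  qed
  show ?thesis using part1 part2 unfolding f_def \<Phi>'_def by blast
qed


end
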